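(* $\mathrm{para}\text{-}\mathrm{LOGCFL}/\mathrm{poly}\cap\mathrm{PHSP}\subseteq\mathrm{para}\text{-}\mathrm{LOGDCFL}/\mathrm{poly}$ if and only if $\mathrm{LOGCFL}/\mathrm{poly}\subseteq\mathrm{LOGDCFL}/\mathrm{poly}$.
   Context: $\mathrm{FL}/\mathrm{poly}$: functions computable by a deterministic Turing machine with read-only input tape, read-only two-way advice tape holding $h(|x|)$ for an arbitrary advice function $h$ with $|h(n)|\le n^{O(1)}$, work tape and write-once output tape, in polynomial time with $O(\log|x|)$ work space. $\mathrm{LOGCFL}/\mathrm{poly}$ (resp. $\mathrm{LOGDCFL}/\mathrm{poly}$): languages $L$ with $x\in L\iff f(x)\in B$ for some $f\in\mathrm{FL}/\mathrm{poly}$ and some context-free (resp. deterministic context-free) $B$. A parameterized decision problem is a pair $(L,m)$ with $L\subseteq\Sigma^*$ and size parameter $m:\Sigma^*\to\mathbb{N}$. $(f,m)\in\mathrm{para}\text{-}\mathrm{FL}/\mathrm{poly}$ if $m$ is logarithmic-space computable ($x\mapsto1^{m(x)}$ computable in polynomial time with logarithmic work space) and there are an advised deterministic Turing machine $M$, an advice function $h$ and a polynomial $p$ with $|h(|x|)|\le p(m(x)|x|)$ such that $M$ on input $x$ with advice $h(|x|)$ outputs $f(x)$ within time $p(m(x)|x|)$ using space $O(\log(m(x)|x|))$. $\mathrm{para}\text{-}\mathrm{LOGCFL}/\mathrm{poly}$ (resp. $\mathrm{para}\text{-}\mathrm{LOGDCFL}/\mathrm{poly}$): the $(L,m)$ such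 that for some $f$ with $(f,m)\in\mathrm{para}\text{-}\mathrm{FL}/\mathrm{poly}$ and a context-free (resp. deterministic context-free) $A$, $L=\{x\mid f(x)\in A\}$. $\mathrm{PHSP}$ is the collection of parameterized decision problems $(L,m)$ whose size parameter $m$ is polynomially honest: $|x|\le p(m(x))$ for some polynomial $p$ and all $x$. *)

theory Defs
  imports Complex_Main
begin

text \<open>Symbols are natural numbers; an alphabet is a finite set of naturals;
  a string over Sigma is an element of lists Sigma.  A (parameterized) problem
  carries its alphabet explicitly.\<close>

definition poly_bd :: "nat \<Rightarrow> nat \<Rightarrow> nat" where
  "poly_bd k n = n ^ k + k"

text \<open>Read-only two-way input tape (with end markers), read-only two-way
  advice tape (with end markers), one read/write work tape (one-way infinite),
  write-once output tape.\<close>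

datatype sym = Blk | LM | RM | Sym nat

datatype dir = Lft | Stay | Rgt

record tm =
  states :: "nat set"
  alph :: "nat set"
  start :: nat
  halt :: nat
  delta :: "nat \<Rightarrow> sym \<Rightarrow> sym \<Rightarrow> sym \<Rightarrow> nat \<times> dir \<times> dir \<times> sym \<times> dir \<times> nat option"

definition tm_syms :: "tm \<Rightarrow> sym set" where
  "tm_syms M = {Blk, LM, RM} \<union> Sym ` alph M"

definition wf_tm :: "tm \<Rightarrow> bool" where
  "wf_tm M \<longleftrightarrow> finite (states M) \<and> finite (alph M) \<and>
     start M \<in> states M \<and> halt M \<in> states M \<and>
     (\<forall>q\<in>states M. \<forall>a\<in>tm_syms M. \<forall>b\<in>tm_syms M. \<forall>c\<in>tm_syms M.
        (case delta M q a b c of (q', di, da, w, dw, oo) \<Rightarrow>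
           q' \<in> states M \<and> w \<in> insert Blk (Sym ` alph M) \<and> set_option oo \<subseteq> alph M))"

record conf =
  st :: nat
  ipos :: nat
  apos :: nat
  wtape :: "nat \<Rightarrow> sym"
  wpos :: nat
  outp :: "nat list"

definition rd :: "nat list \<Rightarrow> nat \<Rightarrow> sym" where
  "rd x i = (if i = 0 then LM else if i \<le> length x then Sym (x ! (i - 1)) else RM)"

fun mv :: "dir \<Rightarrow> nat \<Rightarrow> nat" where
  "mv Lft i = i - 1"
| "mv Stay i = i"
| "mv Rgt i = Suc i"

definition init_conf :: "tm \<Rightarrow> conf" where
  "init_conf M = \<lparr>st = start M, ipos = 0, apos = 0, wtape = (\<lambda>_. Blk), wpos = 0, outp = []\<rparr>"

definition step :: "tm \<Rightarrow> nat list \<Rightarrow> nat list \<Rightarrow> conf \<Rightarrow> conf" where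
  "step M x a c =
     (if st c = halt M then c else
      (case delta M (st c) (rd x (ipos c)) (rd a (apos c)) (wtape c (wpos c)) of
         (q', di, da, w, dw, oo) \<Rightarrow>
           \<lparr>st = q',
            ipos = min (mv di (ipos c)) (length x + 1),
            apos = min (mv da (apos c)) (length a + 1),
            wtape = (wtape c)(wpos c := w),
            wpos = mv dw (wpos c),
            outp = outp c @ (case oo of None \<Rightarrow> [] | Some s \<Rightarrow> [s])\<rparr>))"

definition run :: "tm \<Rightarrow> nat list \<Rightarrow> nat list \<Rightarrow> nat \<Rightarrow> conf" where
  "run M x a t = (step M x a ^^ t) (init_conf M)"

definition computes_within ::
  "tm \<Rightarrow> nat list \<Rightarrow> nat list \<Rightarrow> nat list \<Rightarrow> nat \<Rightarrow> real \<Rightarrow> bool" where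
  "computes_within M x a y T S \<longleftrightarrow>
     (\<exists>t\<le>T. st (run M x a t) = halt M \<and> outp (run M x a t) = y \<and>
        (\<forall>s\<le>t. real (wpos (run M x a s) + 1) \<le> S))"

definition FL_poly :: "nat set \<Rightarrow> (nat list \<Rightarrow> nat list) \<Rightarrow> bool" where
  "FL_poly \<Sigma> f \<longleftrightarrow>
     (\<exists>M h k c. wf_tm M \<and> \<Sigma> \<subseteq> alph M \<and>
        (\<forall>n. set (h n) \<subseteq> alph M \<and> length (h n) \<le> poly_bd k n) \<and>
        (\<forall>x\<in>lists \<Sigma>. computes_within M x (h (length x)) (f x)
            (poly_bd k (length x)) (c * log 2 (real (length x) + 2))))"

definition logspace_computable :: "nat set \<Rightarrow> (nat list \<Rightarrow> nat) \<Rightarrow> bool" where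
  "logspace_computable \<Sigma> m \<longleftrightarrow>
     (\<exists>M k c. wf_tm M \<and> \<Sigma> \<subseteq> alph M \<and>
        (\<forall>x\<in>lists \<Sigma>. computes_within M x [] (replicate (m x) 1)
            (poly_bd k (length x)) (c * log 2 (real (length x) + 2))))"

definition para_FL_poly :: "nat set \<Rightarrow> (nat list \<Rightarrow> nat list) \<Rightarrow> (nat list \<Rightarrow> nat) \<Rightarrow> bool" where
  "para_FL_poly \<Sigma> f m \<longleftrightarrow> logspace_computable \<Sigma> m \<and>
     (\<exists>M h k c. wf_tm M \<and> \<Sigma> \<subseteq> alph M \<and>
        (\<forall>n. set (h n) \<subseteq> alph M) \<and>
        (\<forall>x\<in>lists \<Sigma>. length (h (length x)) \<le> poly_bd k (m x * length x) \<and>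
            computes_within M x (h (length x)) (f x)
              (poly_bd k (m x * length x)) (c * log 2 (real (m x * length x) + 2))))"

text \<open>A context-free grammar: finite set of productions A -> alpha, where
  nonterminals are Inl n and terminals Inr a; plus a start nonterminal.\<close>
record cfg =
  prods :: "(nat \<times> (nat + nat) list) set"
  gstart :: nat

inductive derives1 :: "cfg \<Rightarrow> (nat + nat) list \<Rightarrow> (nat + nat) list \<Rightarrow> bool" for G where
  "(A, \<alpha>) \<in> prods G \<Longrightarrow> derives1 G (u @ [Inl A] @ v) (u @ \<alpha> @ v)"

definition cfg_lang :: "cfg \<Rightarrow> nat list set" where
  "cfg_lang G = {w. (derives1 G)\<^sup>*\<^sup>* [Inl (gstart G)] (map Inr w)}"

definition is_cfl :: "nat list set \<Rightarrow> bool" where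
  "is_cfl B \<longleftrightarrow> (\<exists>G. finite (prods G) \<and> B = cfg_lang G)"

record dpda =
  pstates :: "nat set"
  pinp :: "nat set"
  pstk :: "nat set"
  pstart :: nat
  pbottom :: nat
  pfinal :: "nat set"
  ptrans :: "nat \<Rightarrow> nat option \<Rightarrow> nat \<Rightarrow> (nat \<times> nat list) option"

definition wf_dpda :: "dpda \<Rightarrow> bool" where
  "wf_dpda P \<longleftrightarrow> finite (pstates P) \<and> finite (pinp P) \<and> finite (pstk P) \<and>
     pstart P \<in> pstates P \<and> pbottom P \<in> pstk P \<and> pfinal P \<subseteq> pstates P \<and>
     (\<forall>q a Z p \<beta>. ptrans P q a Z = Some (p, \<beta>) \<longrightarrow>
        q \<in> pstates P \<and> set_option a \<subseteq> pinp P \<and> Z \<in> pstk P \<and>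
        p \<in> pstates P \<and> set \<beta> \<subseteq> pstk P) \<and>
     (\<forall>q Z. ptrans P q None Z \<noteq> None \<longrightarrow> (\<forall>a. ptrans P q (Some a) Z = None))"

inductive dstep :: "dpda \<Rightarrow> nat \<times> nat list \<times> nat list \<Rightarrow> nat \<times> nat list \<times> nat list \<Rightarrow> bool"
  for P where
  read: "ptrans P q (Some a) Z = Some (p, \<beta>) \<Longrightarrow> dstep P (q, a # w, Z # \<gamma>) (p, w, \<beta> @ \<gamma>)"
| eps: "ptrans P q None Z = Some (p, \<beta>) \<Longrightarrow> dstep P (q, w, Z # \<gamma>) (p, w, \<beta> @ \<gamma>)"

definition dpda_lang :: "dpda \<Rightarrow> nat list set" where
  "dpda_lang P = {w \<in> lists (pinp P). \<exists>q \<gamma>. q \<in> pfinal P \<and>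
      (dstep P)\<^sup>*\<^sup>* (pstart P, w, [pbottom P]) (q, [], \<gamma>)}"

definition is_dcfl :: "nat list set \<Rightarrow> bool" where
  "is_dcfl B \<longleftrightarrow> (\<exists>P. wf_dpda P \<and> B = dpda_lang P)"

definition LOGCFL_poly :: "(nat set \<times> nat list set) set" where
  "LOGCFL_poly = {(\<Sigma>, L). finite \<Sigma> \<and> L \<subseteq> lists \<Sigma> \<and>
      (\<exists>f B. FL_poly \<Sigma> f \<and> is_cfl B \<and> (\<forall>x\<in>lists \<Sigma>. x \<in> L \<longleftrightarrow> f x \<in> B))}"

definition LOGDCFL_poly :: "(nat set \<times> nat list set) set" where
  "LOGDCFL_poly = {(\<Sigma>, L). finite \<Sigma> \<and> L \<subseteq> lists \<Sigma> \<and>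
      (\<exists>f B. FL_poly \<Sigma> f \<and> is_dcfl B \<and> (\<forall>x\<in>lists \<Sigma>. x \<in> L \<longleftrightarrow> f x \<in> B))}"

text \<open>A parameterized decision problem is (Sigma, L, m) with m the size parameter.\<close>
definition para_LOGCFL_poly :: "(nat set \<times> nat list set \<times> (nat list \<Rightarrow> nat)) set" where
  "para_LOGCFL_poly = {(\<Sigma>, L, m). finite \<Sigma> \<and> L \<subseteq> lists \<Sigma> \<and>
      (\<exists>f B. para_FL_poly \<Sigma> f m \<and> is_cfl B \<and> L = {x \<in> lists \<Sigma>. f x \<in> B})}"

definition para_LOGDCFL_poly :: "(nat set \<times> nat list set \<times> (nat list \<Rightarrow> nat)) set" where
  "para_LOGDCFL_poly = {(\<Sigma>, L, m). finite \<Sigma> \<and> L \<subseteq> lists \<Sigma> \<and>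
      (\<exists>f B. para_FL_poly \<Sigma> f m \<and> is_dcfl B \<and> L = {x \<in> lists \<Sigma>. f x \<in> B})}"

definition PHSP :: "(nat set \<times> nat list set \<times> (nat list \<Rightarrow> nat)) set" where
  "PHSP = {(\<Sigma>, L, m). \<exists>k. \<forall>x\<in>lists \<Sigma>. length x \<le> poly_bd k (m x)}"

end

theory Submission
  imports Defs
begin
lemma absorb: "\<exists>K. \<forall>n::nat. (n+2)^a + b \<le> n^K + K"
proof (intro exI allI)
  fix n :: nat
  define K where "K = 2*a + 4^a + b + 1"
  show "(n+2)^a + b \<le> n^K + K"
  proof (cases "n \<ge> 2")
    case True
    have "n+2 \<le> n*n" proof - have "n + 2 \<le> 2*n" using True by simp also have "\<dots> \<le> n*n" using True by (intro mult_right_mono) auto finally show ?thesis . qed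
    hence "(n+2)^a \<le> (n*n)^a" by (rule power_mono) simp
    also have "\<dots> = n^(2*a)" by (simp add: power_mult_distrib mult_2 power_add)
    also have "\<dots> \<le> n^K" using True by (intro power_increasing) (auto simp: K_def)
    finally show ?thesis by (auto simp: K_def)
  next
    case False
    have "(n+2)^a \<le> 4^a" using False by (intro power_mono) auto
    then show ?thesis by (auto simp: K_def)
  qed
qed

lemma bdA1: "(m::nat) \<le> poly_bd j n \<Longrightarrow> m*n \<le> (n+2)^(j+2)"
proof -
  assume m: "m \<le> poly_bd j n"
  have j: "j \<le> 2^j" by (simp add: less_imp_le less_exp)
  have "2^j \<le> (n+2)^j" by (intro power_mono) auto
  have "n^j \<le> (n+2)^j" by (intro power_mono) auto
  have "(n+2)^(j+1) = (n+2)^j * (n+2)" by simp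
  also have "\<dots> \<ge> (n+2)^j * 2" by (intro mult_left_mono) auto
  finally have "n^j + j \<le> (n+2)^(j+1)" using j \<open>2^j \<le> _\<close> \<open>n^j \<le> _\<close> by linarith
  hence "m \<le> (n+2)^(j+1)" using m by (simp add: poly_bd_def)
  hence "m*n \<le> (n+2)^(j+1) * (n+2)" by (intro mult_mono) auto
  moreover have "(n+2)^(j+1) * (n+2) = (n+2)^(j+2)" by (simp only: power_Suc2[symmetric]) simp
  ultimately show ?thesis by (metis order_trans le_refl)
qed

lemma bdA2: "(m::nat) \<le> poly_bd j n \<Longrightarrow> m*n + 2 \<le> (n+2)^(j+3)"
proof -
  assume "m \<le> poly_bd j n"
  hence a: "m*n \<le> (n+2)^(j+2)" by (rule bdA1)
  have "(n+2)^(j+3) = (n+2)^(j+2) * (n+2)" by (metis add_Suc_right numeral_3_eq_3 numeral_2_eq_2 power_Suc2)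
  also have "\<dots> \<ge> (n+2)^(j+2) * 2" by (intro mult_left_mono) auto
  finally have "(n+2)^(j+3) \<ge> (n+2)^(j+2) + (n+2)^(j+2)" by simp
  moreover have "(n+2)^(j+2) \<ge> 2"
  proof - have "(n+2)^1 \<le> (n+2)^(j+2)" by (intro power_increasing) auto thus ?thesis by simp qed
  ultimately show ?thesis using a by linarith
qed

lemma poly_bd_mono: "k < K \<Longrightarrow> n \<le> n' \<Longrightarrow> poly_bd k n \<le> poly_bd K n'"
proof (cases "n' = 0")
  case True
  assume "k < K" "n \<le> n'"
  then have "n = 0" using True by simp
  have "(0::nat)^k \<le> 1" by (cases k) auto
  then show ?thesis using True \<open>n=0\<close> \<open>k<K\<close> by (simp add: poly_bd_def)
next
  case False
  assume a: "k < K" "n \<le> n'"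
  have "n^k \<le> n'^k" using a by (intro power_mono) auto
  also have "\<dots> \<le> n'^K" using False a by (intro power_increasing) auto
  finally show ?thesis using a by (simp add: poly_bd_def)
qed


lemma cw_mono: "computes_within M x a y T S \<Longrightarrow> T \<le> T' \<Longrightarrow> S \<le> S' \<Longrightarrow> computes_within M x a y T' S'"
  unfolding computes_within_def by (metis order_trans)

lemma log2_ge1: "(2::real) \<le> z \<Longrightarrow> 1 \<le> log 2 z"
  by simp

lemma lemA:
  assumes P: "para_FL_poly \<Sigma> f m" and J: "\<forall>x\<in>lists \<Sigma>. m x \<le> poly_bd j (length x)"
  shows "FL_poly \<Sigma> f"
proof -
  obtain M h k c where M: "wf_tm M" "\<Sigma> \<subseteq> alph M" "\<forall>n. set (h n) \<subseteq> alph M"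
    and H: "\<forall>x\<in>lists \<Sigma>. length (h (length x)) \<le> poly_bd k (m x * length x) \<and>
            computes_within M x (h (length x)) (f x)
              (poly_bd k (m x * length x)) (c * log 2 (real (m x * length x) + 2))"
    using P unfolding para_FL_poly_def by blast
  obtain K where K: "\<forall>n::nat. (n+2)^((j+2)*k) + k \<le> n^K + K" using absorb by blast
  have T: "poly_bd k (m x * length x) \<le> poly_bd K (length x)" if "x \<in> lists \<Sigma>" for x
  proof -
    let ?n = "length x"
    have "m x * ?n \<le> (?n+2)^(j+2)" using J that bdA1 by blast
    hence "(m x * ?n)^k \<le> ((?n+2)^(j+2))^k" by (rule power_mono) simp
    also have "\<dots> = (?n+2)^((j+2)*k)" by (rule power_mult[symmetric])
    finally show ?thesis using K unfolding poly_bd_def by (metis add_le_mono1 order_trans)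
  qed
  have S: "c * log 2 (real (m x * length x) + 2) \<le> (\<bar>c\<bar> * real (j+3)) * log 2 (real (length x) + 2)"
    if "x \<in> lists \<Sigma>" for x
  proof -
    let ?n = "length x"
    have "m x * ?n + 2 \<le> (?n+2)^(j+3)" using J that bdA2 by blast
    hence "real (m x * ?n) + 2 \<le> real ((?n+2)^(j+3))" by linarith
    hence "log 2 (real (m x * ?n) + 2) \<le> log 2 (real ((?n+2)^(j+3)))" proof -
      have p: "0 < real (m x * ?n) + 2" by (metis of_nat_0_le_iff add_nonneg_pos zero_less_numeral)
      have "0 < real ((?n+2)^(j+3))" by simp
      with p show ?thesis using \<open>real (m x * ?n) + 2 \<le> _\<close> by (simp only: log_le_cancel_iff one_less_numeral_iff semiring_norm(76))
    qed
    also have "\<dots> = real (j+3) * log 2 (real ?n + 2)" by (simp add: log_nat_power add.commute)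
    finally have L: "log 2 (real (m x * ?n) + 2) \<le> real (j+3) * log 2 (real ?n + 2)" .
    have L0: "0 \<le> log 2 (real (m x * ?n) + 2)"
      by (rule order_trans[OF zero_le_one log2_ge1]) (metis of_nat_0_le_iff le_add_same_cancel2)
    have "c * log 2 (real (m x * ?n) + 2) \<le> \<bar>c\<bar> * log 2 (real (m x * ?n) + 2)"
      using L0 by (intro mult_right_mono) auto
    also have "\<dots> \<le> \<bar>c\<bar> * (real (j+3) * log 2 (real ?n + 2))" using L by (intro mult_left_mono) auto
    finally show ?thesis by (simp add: mult.assoc)
  qed
  define h' where "h' n = (if \<exists>x\<in>lists \<Sigma>. length x = n then h n else [])" for n
  show ?thesis unfolding FL_poly_def
  proof (intro exI conjI allI ballI)
    show "wf_tm M" "\<Sigma> \<subseteq> alph M" using M by auto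
    fix n show "set (h' n) \<subseteq> alph M" using M by (auto simp: h'_def)
    show "length (h' n) \<le> poly_bd K n"
    proof (cases "\<exists>x\<in>lists \<Sigma>. length x = n")
      case True
      then obtain x where x: "x \<in> lists \<Sigma>" "length x = n" by blast
      have "length (h n) \<le> poly_bd K n" using H x T[OF x(1)] by (metis order_trans)
      then show ?thesis using True by (simp add: h'_def)
    qed (simp add: h'_def)
  next
    fix x assume x: "x \<in> lists \<Sigma>"
    have "h' (length x) = h (length x)" using x by (auto simp: h'_def)
    then show "computes_within M x (h' (length x)) (f x) (poly_bd K (length x))
        (\<bar>c\<bar> * real (j+3) * log 2 (real (length x) + 2))"
      using H x T[OF x] S[OF x] by (auto intro: cw_mono)
  qed
qed


lemma lemB:
  assumes F: "FL_poly \<Sigma> f" and LS: "logspace_computable \<Sigma> m"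
    and J: "\<forall>x\<in>lists \<Sigma>. length x \<le> poly_bd j (m x)"
  shows "para_FL_poly \<Sigma> f m"
proof -
  obtain M h k c where M: "wf_tm M" "\<Sigma> \<subseteq> alph M"
    and Hn: "\<forall>n. set (h n) \<subseteq> alph M \<and> length (h n) \<le> poly_bd k n"
    and H: "\<forall>x\<in>lists \<Sigma>. computes_within M x (h (length x)) (f x)
            (poly_bd k (length x)) (c * log 2 (real (length x) + 2))"
    using F unfolding FL_poly_def by blast
  define K where "K = (j+1)^k + k + 1"
  define C where "C = \<bar>c\<bar> * log 2 (real j + 3)"
  have T: "poly_bd k (length x) \<le> poly_bd K (m x * length x)" if "x \<in> lists \<Sigma>" for x
  proof (cases "m x = 0")
    case True
    have "0^j \<le> (1::nat)" by (cases j) auto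
    moreover have "length x \<le> 0^j + j" using J that True by (metis poly_bd_def)
    ultimately have n: "length x \<le> j+1" by linarith
    have "length x ^ k \<le> (j+1)^k" using n by (rule power_mono) simp
    then show ?thesis using True by (simp add: poly_bd_def K_def)
  next
    case False
    then show ?thesis by (intro poly_bd_mono) (auto simp: K_def)
  qed
  have S: "c * log 2 (real (length x) + 2) \<le> C * log 2 (real (m x * length x) + 2)"
    if "x \<in> lists \<Sigma>" for x
  proof -
    let ?n = "length x"
    have Lj: "1 \<le> log 2 (real j + 3)" by (rule log2_ge1) simp
    have L0: "0 \<le> log 2 (real ?n + 2)" by (rule order_trans[OF zero_le_one log2_ge1]) simp
    have A: "c * log 2 (real ?n + 2) \<le> \<bar>c\<bar> * log 2 (real ?n + 2)"
      using L0 by (intro mult_right_mono) auto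
    show ?thesis
    proof (cases "m x = 0")
      case True
      have "0^j \<le> (1::nat)" by (cases j) auto
      moreover have "?n \<le> 0^j + j" using J that True by (metis poly_bd_def)
      ultimately have n: "?n \<le> j+1" by linarith
      hence "log 2 (real ?n + 2) \<le> log 2 (real j + 3)" by simp
      hence "\<bar>c\<bar> * log 2 (real ?n + 2) \<le> \<bar>c\<bar> * log 2 (real j + 3)" by (intro mult_left_mono) auto
      with A have "c * log 2 (real ?n + 2) \<le> \<bar>c\<bar> * log 2 (real j + 3)" by linarith
      then show ?thesis using True by (simp add: C_def)
    next
      case False
      have "?n \<le> m x * ?n" using False by simp
      hence "real ?n + 2 \<le> real (m x * ?n) + 2" by linarith
      hence B: "log 2 (real ?n + 2) \<le> log 2 (real (m x * ?n) + 2)"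
        by (subst log_le_cancel_iff) (auto simp del: of_nat_mult)
      have L1: "1 \<le> log 2 (real (m x * ?n) + 2)" by (rule log2_ge1) (simp del: of_nat_mult)
      have "\<bar>c\<bar> * log 2 (real ?n + 2) \<le> \<bar>c\<bar> * log 2 (real (m x * ?n) + 2)"
        using B by (intro mult_left_mono) auto
      also have "\<dots> \<le> \<bar>c\<bar> * (log 2 (real j + 3) * log 2 (real (m x * ?n) + 2))"
        using Lj L1 by (intro mult_left_mono) (auto intro: order_trans[OF _ mult_right_mono[of 1]])
      finally have "c * log 2 (real ?n + 2) \<le> \<bar>c\<bar> * (log 2 (real j + 3) * log 2 (real (m x * ?n) + 2))"
        using A by linarith
      then show ?thesis by (simp only: C_def mult.assoc)
    qed
  qed
  show ?thesis unfolding para_FL_poly_def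
  proof (intro conjI exI allI ballI)
    show "logspace_computable \<Sigma> m" by (rule LS)
    show "wf_tm M" "\<Sigma> \<subseteq> alph M" using M by auto
    fix n show "set (h n) \<subseteq> alph M" using Hn by auto
  next
    fix x assume x: "x \<in> lists \<Sigma>"
    show "length (h (length x)) \<le> poly_bd K (m x * length x)" using Hn T[OF x] by (metis order_trans)
    show "computes_within M x (h (length x)) (f x) (poly_bd K (m x * length x))
              (C * log 2 (real (m x * length x) + 2))"
      using H x T[OF x] S[OF x] by (auto intro: cw_mono)
  qed
qed


lemma outp_len: "length (outp (run M x a t)) \<le> t"
proof (induction t)
  case 0 then show ?case by (simp add: run_def init_conf_def)
next
  case (Suc t)
  have r: "run M x a (Suc t) = step M x a (run M x a t)" by (simp add: run_def)
  have "length (outp (step M x a c)) \<le> Suc (length (outp c))" for c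
  proof (cases "st c = halt M")
    case True then show ?thesis by (simp add: step_def)
  next
    case False
    obtain q' di da w dw oo where d: "delta M (st c) (rd x (ipos c)) (rd a (apos c)) (wtape c (wpos c)) = (q',di,da,w,dw,oo)"
      by (metis prod_cases6)
    show ?thesis using False by (cases oo) (simp_all add: step_def d)
  qed
  then have "length (outp (run M x a (Suc t))) \<le> Suc (length (outp (run M x a t)))" unfolding r .
  then show ?case using Suc.IH by linarith
qed

lemma logspace_bound:
  assumes "logspace_computable \<Sigma> m" shows "\<exists>j. \<forall>x\<in>lists \<Sigma>. m x \<le> poly_bd j (length x)"
proof -
  obtain M k c where H: "\<forall>x\<in>lists \<Sigma>. computes_within M x [] (replicate (m x) 1)
            (poly_bd k (length x)) (c * log 2 (real (length x) + 2))"
    using assms unfolding logspace_computable_def by auto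
  have "m x \<le> poly_bd k (length x)" if "x \<in> lists \<Sigma>" for x
  proof -
    have "computes_within M x [] (replicate (m x) 1)
            (poly_bd k (length x)) (c * log 2 (real (length x) + 2))" using H that by blast
    then obtain t where "t \<le> poly_bd k (length x)" "outp (run M x [] t) = replicate (m x) 1"
      unfolding computes_within_def by blast
    then show ?thesis using outp_len[of M x "[]" t] by (metis length_replicate order_trans)
  qed
  then show ?thesis by blast
qed

definition lenTM :: "nat set \<Rightarrow> tm" where
  "lenTM \<Sigma> = \<lparr>states = {0,1}, alph = insert 1 \<Sigma>, start = 0, halt = 1,
     delta = (\<lambda>q a b c. case a of Sym s \<Rightarrow> (0,Rgt,Stay,Blk,Stay,Some 1)
        | LM \<Rightarrow> (0,Rgt,Stay,Blk,Stay,None) | _ \<Rightarrow> (1,Stay,Stay,Blk,Stay,None))\<rparr>"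

lemma lenTM_wf: "finite \<Sigma> \<Longrightarrow> wf_tm (lenTM \<Sigma>)"
  unfolding wf_tm_def lenTM_def by (auto split: sym.splits)

lemma lenTM_run:
  "t \<le> length x + 1 \<Longrightarrow> st (run (lenTM \<Sigma>) x a t) = 0 \<and> ipos (run (lenTM \<Sigma>) x a t) = t \<and>
     wpos (run (lenTM \<Sigma>) x a t) = 0 \<and> outp (run (lenTM \<Sigma>) x a t) = replicate (t - 1) 1"
proof (induction t)
  case 0 then show ?case by (simp add: run_def init_conf_def lenTM_def)
next
  case (Suc t)
  have r: "run (lenTM \<Sigma>) x a (Suc t) = step (lenTM \<Sigma>) x a (run (lenTM \<Sigma>) x a t)" by (simp add: run_def)
  from Suc have IH: "st (run (lenTM \<Sigma>) x a t) = 0 \<and> ipos (run (lenTM \<Sigma>) x a t) = t \<and>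
     wpos (run (lenTM \<Sigma>) x a t) = 0 \<and> outp (run (lenTM \<Sigma>) x a t) = replicate (t - 1) 1" by simp
  show ?case
  proof (cases "t = 0")
    case True
    then show ?thesis unfolding r step_def using IH Suc.prems by (simp add: lenTM_def rd_def)
  next
    case False
    then have "rd x t = Sym (x ! (t - 1))" using Suc.prems by (simp add: rd_def)
    moreover have "replicate (t - 1) (1::nat) @ [1] = replicate (Suc t - 1) 1"
      using False by (cases t) (auto simp: replicate_append_same)
    ultimately show ?thesis unfolding r step_def using IH Suc.prems by (simp add: lenTM_def)
  qed
qed

lemma lenTM_logspace: "finite \<Sigma> \<Longrightarrow> logspace_computable \<Sigma> length"
  unfolding logspace_computable_def
proof (intro exI conjI ballI)
  assume "finite \<Sigma>"
  then show "wf_tm (lenTM \<Sigma>)" by (rule lenTM_wf)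
  show "\<Sigma> \<subseteq> alph (lenTM \<Sigma>)" by (auto simp: lenTM_def)
  fix x :: "nat list"
  let ?M = "lenTM \<Sigma>"
  let ?n = "length x"
  have A: "run ?M x [] (?n + 2) = step ?M x [] (run ?M x [] (?n+1))" by (simp add: run_def)
  have B: "st (run ?M x [] (?n+1)) = 0 \<and> ipos (run ?M x [] (?n+1)) = ?n+1 \<and>
     wpos (run ?M x [] (?n+1)) = 0 \<and> outp (run ?M x [] (?n+1)) = replicate ?n 1"
    using lenTM_run[of "?n+1" x \<Sigma> "[]"] by simp
  have rdR: "rd x (?n+1) = RM" by (simp add: rd_def)
  have C: "st (run ?M x [] (?n+2)) = 1 \<and> outp (run ?M x [] (?n+2)) = replicate ?n 1 \<and>
     wpos (run ?M x [] (?n+2)) = 0"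
    unfolding A step_def using B rdR by (simp add: lenTM_def)
  have W: "wpos (run ?M x [] s) = 0" if "s \<le> ?n+2" for s
  proof (cases "s = ?n + 2")
    case True then show ?thesis using C by simp
  next
    case False then show ?thesis using that lenTM_run[of s x \<Sigma> "[]"] by simp
  qed
  have T: "?n + 2 \<le> poly_bd 2 ?n"
  proof -
    have "?n \<le> ?n * ?n" by (cases ?n) auto
    then show ?thesis by (simp add: poly_bd_def power2_eq_square)
  qed
  have S1: "1 \<le> log 2 (real ?n + 2)" by (rule log2_ge1) simp
  show "computes_within ?M x [] (replicate (length x) 1) (poly_bd 2 ?n) (1 * log 2 (real ?n + 2))"
    unfolding computes_within_def
    using C W T S1 by (intro exI[of _ "?n+2"]) (auto simp: lenTM_def)
qed

theorem proposition3p3: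
  shows "para_LOGCFL_poly \<inter> PHSP \<subseteq> para_LOGDCFL_poly \<longleftrightarrow> LOGCFL_poly \<subseteq> LOGDCFL_poly"
proof
  assume H: "para_LOGCFL_poly \<inter> PHSP \<subseteq> para_LOGDCFL_poly"
  show "LOGCFL_poly \<subseteq> LOGDCFL_poly"
  proof (rule subsetI)
    fix p assume "p \<in> LOGCFL_poly"
    then obtain \<Sigma> L f B where p: "p = (\<Sigma>, L)" and fin: "finite \<Sigma>" and sub: "L \<subseteq> lists \<Sigma>"
      and F: "FL_poly \<Sigma> f" and B: "is_cfl B" and iff: "\<forall>x\<in>lists \<Sigma>. x \<in> L \<longleftrightarrow> f x \<in> B"
      unfolding LOGCFL_poly_def by blast
    have LS: "logspace_computable \<Sigma> length" using fin by (rule lenTM_logspace)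
    have J1: "\<forall>x\<in>lists \<Sigma>. length x \<le> poly_bd 1 (length x)" by (simp add: poly_bd_def)
    have P: "para_FL_poly \<Sigma> f length" by (rule lemB[OF F LS J1])
    have Leq: "L = {x \<in> lists \<Sigma>. f x \<in> B}" using sub iff by blast
    have "(\<Sigma>, L, length) \<in> para_LOGCFL_poly" unfolding para_LOGCFL_poly_def
      using fin sub P B Leq by blast
    moreover have "(\<Sigma>, L, length) \<in> PHSP" unfolding PHSP_def using J1 by blast
    ultimately have "(\<Sigma>, L, length) \<in> para_LOGDCFL_poly" using H by blast
    then obtain f' B' where P': "para_FL_poly \<Sigma> f' length" and B': "is_dcfl B'"
      and L': "L = {x \<in> lists \<Sigma>. f' x \<in> B'}" unfolding para_LOGDCFL_poly_def by blast
    have F': "FL_poly \<Sigma> f'" by (rule lemA[OF P' J1])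
    show "p \<in> LOGDCFL_poly" unfolding LOGDCFL_poly_def p using fin sub F' B' L' by blast
  qed
next
  assume H: "LOGCFL_poly \<subseteq> LOGDCFL_poly"
  show "para_LOGCFL_poly \<inter> PHSP \<subseteq> para_LOGDCFL_poly"
  proof (rule subsetI)
    fix p assume "p \<in> para_LOGCFL_poly \<inter> PHSP"
    then obtain \<Sigma> L m f B j where p: "p = (\<Sigma>, L, m)" and fin: "finite \<Sigma>" and sub: "L \<subseteq> lists \<Sigma>"
      and P: "para_FL_poly \<Sigma> f m" and B: "is_cfl B" and Leq: "L = {x \<in> lists \<Sigma>. f x \<in> B}"
      and J: "\<forall>x\<in>lists \<Sigma>. length x \<le> poly_bd j (m x)"
      unfolding para_LOGCFL_poly_def PHSP_def by blast
    have LS: "logspace_computable \<Sigma> m" using P unfolding para_FL_poly_def by blast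
    obtain i where I: "\<forall>x\<in>lists \<Sigma>. m x \<le> poly_bd i (length x)" using logspace_bound[OF LS] by blast
    have F: "FL_poly \<Sigma> f" by (rule lemA[OF P I])
    have "(\<Sigma>, L) \<in> LOGCFL_poly" unfolding LOGCFL_poly_def using fin sub F B Leq by blast
    then have "(\<Sigma>, L) \<in> LOGDCFL_poly" using H by blast
    then obtain f' B' where F': "FL_poly \<Sigma> f'" and B': "is_dcfl B'"
      and iff: "\<forall>x\<in>lists \<Sigma>. x \<in> L \<longleftrightarrow> f' x \<in> B'" unfolding LOGDCFL_poly_def by blast
    have P': "para_FL_poly \<Sigma> f' m" by (rule lemB[OF F' LS J])
    have L': "L = {x \<in> lists \<Sigma>. f' x \<in> B'}" using sub iff by blast
    show "p \<in> para_LOGDCFL_poly" unfolding para_LOGDCFL_poly_def p using fin sub P' B' L' by blast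
  qed
qed

end
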